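(* For every field $K$, the set $\widetilde{K}$ is a subfield of $K$.
   Context: Let $K$ be a field. For $r\in K$, a finite set $A(r)$ with $\{r\}\subseteq A(r)\subseteq K$ is called adequate for $r$ if every mapping $f:A(r)\to K$ satisfying (1) if $1\in A(r)$ then $f(1)=1$; (2) if $a,b\in A(r)$ and $a+b\in A(r)$ then $f(a+b)=f(a)+f(b)$; (3) if $a,b\in A(r)$ and $a\cdot b\in A(r)$ then $f(a\cdot b)=f(a)\cdot f(b)$, also satisfies $f(r)=r$. $\widetilde{K}$ denotes the set of all $r\in K$ for which some finite set adequate for $r$ exists. *)

theory Defs
  imports Main
begin

definition adequacy_conds :: "'a::field set \<Rightarrow> ('a \<Rightarrow> 'a) \<Rightarrow> bool" where
  "adequacy_conds A f \<longleftrightarrow>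
     (1 \<in> A \<longrightarrow> f 1 = 1) \<and>
     (\<forall>a\<in>A. \<forall>b\<in>A. a + b \<in> A \<longrightarrow> f (a + b) = f a + f b) \<and>
     (\<forall>a\<in>A. \<forall>b\<in>A. a * b \<in> A \<longrightarrow> f (a * b) = f a * f b)"

text \<open>A finite set A with r in A is adequate for r. Only the values of f on A matter,
  so quantifying over all functions K \<Rightarrow> K is the same as over all maps A \<rightarrow> K.\<close>
definition adequate :: "'a::field set \<Rightarrow> 'a \<Rightarrow> bool" where
  "adequate A r \<longleftrightarrow> finite A \<and> r \<in> A \<and> (\<forall>f. adequacy_conds A f \<longrightarrow> f r = r)"

definition Ktilde :: "'a::field set" where
  "Ktilde = {r. \<exists>A. adequate A r}"

definition is_subfield :: "'a::field set \<Rightarrow> bool" where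
  "is_subfield S \<longleftrightarrow> 0 \<in> S \<and> 1 \<in> S \<and>
     (\<forall>x\<in>S. \<forall>y\<in>S. x + y \<in> S \<and> x * y \<in> S) \<and>
     (\<forall>x\<in>S. - x \<in> S) \<and>
     (\<forall>x\<in>S. x \<noteq> 0 \<longrightarrow> inverse x \<in> S)"

end

theory Submission
  imports Defs
begin

lemma conds_mono: "adequacy_conds C f \<Longrightarrow> A \<subseteq> C \<Longrightarrow> adequacy_conds A f"
  unfolding adequacy_conds_def by blast

lemma adeq_use: "adequate A x \<Longrightarrow> A \<subseteq> C \<Longrightarrow> adequacy_conds C f \<Longrightarrow> f x = x"
  unfolding adequate_def using conds_mono by blast

lemma conds_add: "adequacy_conds C f \<Longrightarrow> a \<in> C \<Longrightarrow> b \<in> C \<Longrightarrow> a + b \<in> C \<Longrightarrow> f (a + b) = f a + f b"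
  unfolding adequacy_conds_def by blast

lemma conds_mult: "adequacy_conds C f \<Longrightarrow> a \<in> C \<Longrightarrow> b \<in> C \<Longrightarrow> a * b \<in> C \<Longrightarrow> f (a * b) = f a * f b"
  unfolding adequacy_conds_def by blast

lemma conds_one: "adequacy_conds C f \<Longrightarrow> 1 \<in> C \<Longrightarrow> f 1 = 1"
  unfolding adequacy_conds_def by blast

lemma zero_in: "(0::'a::field) \<in> Ktilde"
proof -
  have "adequate {0::'a} 0"
    unfolding adequate_def
  proof (intro conjI allI impI)
    fix f assume c: "adequacy_conds {0::'a} f"
    have "f (0 + 0) = f 0 + f 0" using conds_add[OF c, of 0 0] by simp
    thus "f 0 = 0" by (metis add_0 add_cancel_left_right)
  qed auto
  thus ?thesis unfolding Ktilde_def by blast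
qed

lemma one_in: "(1::'a::field) \<in> Ktilde"
proof -
  have "adequate {1::'a} 1"
    unfolding adequate_def using conds_one[of "{1::'a}"] by auto
  thus ?thesis unfolding Ktilde_def by blast
qed

lemma add_in:
  assumes "(x::'a::field) \<in> Ktilde" "y \<in> Ktilde" shows "x + y \<in> Ktilde"
proof -
  obtain A B where A: "adequate A x" and B: "adequate B y" using assms unfolding Ktilde_def by blast
  let ?C = "A \<union> B \<union> {x + y}"
  have "adequate ?C (x + y)"
    unfolding adequate_def
  proof (intro conjI allI impI)
    show "finite ?C" using A B unfolding adequate_def by auto
    show "x + y \<in> ?C" by auto
    fix f assume c: "adequacy_conds ?C f"
    have "f x = x" using adeq_use[OF A _ c] by auto
    moreover have "f y = y" using adeq_use[OF B _ c] by auto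
    moreover have "x \<in> ?C" "y \<in> ?C" using A B unfolding adequate_def by auto
    ultimately show "f (x + y) = x + y" using conds_add[OF c] by auto
  qed
  thus ?thesis unfolding Ktilde_def by blast
qed

lemma mult_in:
  assumes "(x::'a::field) \<in> Ktilde" "y \<in> Ktilde" shows "x * y \<in> Ktilde"
proof -
  obtain A B where A: "adequate A x" and B: "adequate B y" using assms unfolding Ktilde_def by blast
  let ?C = "A \<union> B \<union> {x * y}"
  have "adequate ?C (x * y)"
    unfolding adequate_def
  proof (intro conjI allI impI)
    show "finite ?C" using A B unfolding adequate_def by auto
    show "x * y \<in> ?C" by auto
    fix f assume c: "adequacy_conds ?C f"
    have "f x = x" using adeq_use[OF A _ c] by auto
    moreover have "f y = y" using adeq_use[OF B _ c] by auto
    moreover have "x \<in> ?C" "y \<in> ?C" using A B unfolding adequate_def by auto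
    ultimately show "f (x * y) = x * y" using conds_mult[OF c] by auto
  qed
  thus ?thesis unfolding Ktilde_def by blast
qed

lemma neg_in:
  assumes "(x::'a::field) \<in> Ktilde" shows "- x \<in> Ktilde"
proof -
  obtain A where A: "adequate A x" using assms unfolding Ktilde_def by blast
  let ?C = "A \<union> {0, - x}"
  have "adequate ?C (- x)"
    unfolding adequate_def
  proof (intro conjI allI impI)
    show "finite ?C" using A unfolding adequate_def by auto
    show "- x \<in> ?C" by auto
    fix f assume c: "adequacy_conds ?C f"
    have fx: "f x = x" using adeq_use[OF A _ c] by auto
    have xC: "x \<in> ?C" using A unfolding adequate_def by auto
    have "f (0 + 0) = f 0 + f 0" using conds_add[OF c, of 0 0] by simp
    hence f0: "f 0 = 0" by (metis add_0 add_cancel_left_right)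
    have "f (x + - x) = f x + f (- x)" using conds_add[OF c xC, of "- x"] by auto
    thus "f (- x) = - x" using f0 fx by (simp add: eq_neg_iff_add_eq_0 add.commute)
  qed
  thus ?thesis unfolding Ktilde_def by blast
qed

lemma inv_in:
  assumes "(x::'a::field) \<in> Ktilde" "x \<noteq> 0" shows "inverse x \<in> Ktilde"
proof -
  obtain A where A: "adequate A x" using assms unfolding Ktilde_def by blast
  let ?C = "A \<union> {1, inverse x}"
  have "adequate ?C (inverse x)"
    unfolding adequate_def
  proof (intro conjI allI impI)
    show "finite ?C" using A unfolding adequate_def by auto
    show "inverse x \<in> ?C" by auto
    fix f assume c: "adequacy_conds ?C f"
    have fx: "f x = x" using adeq_use[OF A _ c] by auto
    have xC: "x \<in> ?C" using A unfolding adequate_def by auto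
    have f1: "f 1 = 1" using conds_one[OF c] by auto
    have "f (x * inverse x) = f x * f (inverse x)" using conds_mult[OF c xC, of "inverse x"] assms(2) by auto
    hence "1 = x * f (inverse x)" using f1 fx assms(2) by simp
    thus "f (inverse x) = inverse x" using assms(2)
      by (metis mult.left_commute mult.right_neutral right_inverse)
  qed
  thus ?thesis unfolding Ktilde_def by blast
qed

theorem theorem1:
  shows "is_subfield (Ktilde :: 'a::field set)"
  unfolding is_subfield_def
  by (simp add: zero_in one_in add_in mult_in neg_in inv_in)

end
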